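(* Let $\mathbb{F}\in\{\mathbb{R},\mathbb{C}\}$ and let $\mathcal{P}(M,N)$ be the set of Parseval frames for $\mathbb{F}^N$ with $M$ vectors. For each $M>N$ there exist constants $0<c\leq d<1$, depending only on $M$ and $N$, such that whenever $\Phi=\{\varphi_i\}_{i=1}^M\in\mathcal{P}(M,N)$ maximizes $TC$ over $\mathcal{P}(M,N)$, we have $c\leq\|\varphi_i\|\leq d$ for every $i=1,\dots,M$.
   Context: A Parseval frame for $\mathbb{F}^N$ is a family $\{\varphi_i\}_{i=1}^M\subseteq\mathbb{F}^N$ whose $N\times M$ matrix $\Phi$ (columns $\varphi_i$) satisfies $\Phi\Phi^*=I$. The total coherence is $TC(\Phi)=\sum_{i\neq j}|\langle\varphi_i,\varphi_j\rangle|$. *)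

theory Defs
  imports Complex_Main
begin

text \<open>Vectors of F^N are represented as functions nat => complex (coordinates k < N);
  a family of M vectors is Phi :: nat => nat => complex, with Phi i the i-th vector
  (i < M) and Phi i k its k-th coordinate. The field F is encoded by a coefficient
  set K, with K = Reals (F = R) or K = UNIV (F = C).\<close>

definition frame_inner :: "nat \<Rightarrow> (nat \<Rightarrow> complex) \<Rightarrow> (nat \<Rightarrow> complex) \<Rightarrow> complex" where
  "frame_inner N x y = (\<Sum>k<N. x k * cnj (y k))"

definition frame_vnorm :: "nat \<Rightarrow> (nat \<Rightarrow> complex) \<Rightarrow> real" where
  "frame_vnorm N x = sqrt (\<Sum>k<N. (cmod (x k))\<^sup>2)"

definition parseval_frames :: "complex set \<Rightarrow> nat \<Rightarrow> nat \<Rightarrow> (nat \<Rightarrow> nat \<Rightarrow> complex) set" where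
  "parseval_frames K M N =
     {Phi. (\<forall>i<M. \<forall>k<N. Phi i k \<in> K)
         \<and> (\<forall>i k. (M \<le> i \<or> N \<le> k) \<longrightarrow> Phi i k = 0)
         \<and> (\<forall>k<N. \<forall>l<N. (\<Sum>i<M. Phi i k * cnj (Phi i l)) = (if k = l then 1 else 0))}"

definition total_coherence :: "nat \<Rightarrow> nat \<Rightarrow> (nat \<Rightarrow> nat \<Rightarrow> complex) \<Rightarrow> real" where
  "total_coherence M N Phi =
     (\<Sum>i<M. \<Sum>j<M. if i \<noteq> j then cmod (frame_inner N (Phi i) (Phi j)) else 0)"

end

theory Submission
  imports Defs
begin

lemma cs_sum:
  fixes x :: "nat \<Rightarrow> real"
  assumes "finite B"
  shows "(\<Sum>b\<in>B. x b)^2 \<le> real (card B) * (\<Sum>b\<in>B. (x b)^2)"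
proof -
  have "0 \<le> (\<Sum>a\<in>B. \<Sum>b\<in>B. (x a - x b)^2)" by (intro sum_nonneg) auto
  also have "\<dots> = (\<Sum>a\<in>B. \<Sum>b\<in>B. (x a)^2 + (x b)^2 - 2 * x a * x b)"
    by (simp add: power2_diff)
  also have "\<dots> = 2 * (real (card B) * (\<Sum>b\<in>B. (x b)^2)) - 2 * (\<Sum>b\<in>B. x b)^2"
    by (simp add: sum.distrib sum_subtractf sum_distrib_left sum_distrib_right power2_eq_square
        algebra_simps)
  finally show ?thesis by simp
qed

lemma mcn: "z * cnj z = (complex_of_real (cmod z))^2"
  using complex_norm_square[of z] by simp

lemma inner_cnj: "frame_inner N y x = cnj (frame_inner N x y)"
  unfolding frame_inner_def by (simp add: mult.commute)

lemma cmod_inner_sym: "cmod (frame_inner N y x) = cmod (frame_inner N x y)"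
  by (simp add: inner_cnj[of N y x])

definition nn :: "nat \<Rightarrow> (nat \<Rightarrow> complex) \<Rightarrow> real" where
  "nn N x = (\<Sum>k<N. (cmod (x k))\<^sup>2)"

lemma inner_self: "frame_inner N x x = complex_of_real (nn N x)"
  unfolding frame_inner_def nn_def by (simp add: mcn)

lemma inner_add_left: "frame_inner N (\<lambda>k. x k + y k) z = frame_inner N x z + frame_inner N y z"
  unfolding frame_inner_def by (simp add: sum.distrib distrib_right)
lemma inner_diff_left: "frame_inner N (\<lambda>k. x k - y k) z = frame_inner N x z - frame_inner N y z"
  unfolding frame_inner_def by (simp add: sum_subtractf left_diff_distrib)
lemma inner_scale_left: "frame_inner N (\<lambda>k. c * x k) z = c * frame_inner N x z"
  unfolding frame_inner_def by (simp add: sum_distrib_left mult.assoc)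
lemma inner_add_right: "frame_inner N z (\<lambda>k. x k + y k) = frame_inner N z x + frame_inner N z y"
  unfolding frame_inner_def by (simp add: sum.distrib distrib_left)
lemma inner_diff_right: "frame_inner N z (\<lambda>k. x k - y k) = frame_inner N z x - frame_inner N z y"
  unfolding frame_inner_def by (simp add: sum_subtractf right_diff_distrib)
lemma inner_scale_right: "frame_inner N z (\<lambda>k. c * x k) = cnj c * frame_inner N z x"
  unfolding frame_inner_def by (simp add: sum_distrib_left algebra_simps)

lemma sum_norms:
  assumes "Phi \<in> parseval_frames K M N"
  shows "(\<Sum>a<M. nn N (Phi a)) = real N"
proof -
  have "complex_of_real (\<Sum>a<M. nn N (Phi a)) = (\<Sum>a<M. \<Sum>k<N. Phi a k * cnj (Phi a k))"
    by (simp add: nn_def mcn)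
  also have "\<dots> = (\<Sum>k<N. \<Sum>a<M. Phi a k * cnj (Phi a k))" by (rule sum.swap)
  also have "\<dots> = (\<Sum>k<N. 1)" using assms unfolding parseval_frames_def by simp
  finally show ?thesis by (metis of_real_eq_iff of_real_of_nat_eq card_lessThan sum_constant mult.right_neutral of_nat_id)
qed

lemma row_sq:
  assumes "Phi \<in> parseval_frames K M N"
  shows "(\<Sum>b<M. (cmod (frame_inner N (Phi i) (Phi b)))^2) = nn N (Phi i)"
proof -
  have P: "\<And>k l. k < N \<Longrightarrow> l < N \<Longrightarrow> (\<Sum>b<M. Phi b k * cnj (Phi b l)) = (if k = l then 1 else 0)"
    using assms unfolding parseval_frames_def by blast
  have "complex_of_real (\<Sum>b<M. (cmod (frame_inner N (Phi i) (Phi b)))^2)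
      = (\<Sum>b<M. frame_inner N (Phi i) (Phi b) * cnj (frame_inner N (Phi i) (Phi b)))"
    by (simp add: mcn)
  also have "\<dots> = (\<Sum>b<M. \<Sum>k<N. \<Sum>l<N. Phi b k * (Phi i l * (cnj (Phi b l) * cnj (Phi i k))))"
    unfolding frame_inner_def by (simp add: sum_product algebra_simps)
  also have "\<dots> = (\<Sum>k<N. \<Sum>l<N. Phi i l * cnj (Phi i k) * (\<Sum>b<M. Phi b k * cnj (Phi b l)))"
    by (simp add: sum_distrib_left sum.swap[of _ "{..<M}"] algebra_simps)
  also have "\<dots> = (\<Sum>k<N. \<Sum>l<N. Phi i l * cnj (Phi i k) * (if k = l then 1 else 0))"
    by (intro sum.cong refl) (simp add: P)
  also have "\<dots> = (\<Sum>k<N. Phi i k * cnj (Phi i k))"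
    by (simp add: if_distrib cong: if_cong)
  also have "\<dots> = complex_of_real (nn N (Phi i))"
    by (simp add: nn_def mcn)
  finally show ?thesis using of_real_eq_iff by blast
qed

definition rr :: complex where "rr = complex_of_real (sqrt 2 / 2)"

lemma rr_cnj[simp]: "cnj rr = rr" by (simp add: rr_def)
lemma rr_sq: "rr * rr = 1/2"
  unfolding rr_def by (simp flip: of_real_mult)
lemma rr_real: "rr \<in> \<real>" by (simp add: rr_def)
lemma rr_cmod: "cmod rr = sqrt 2 / 2" by (simp add: rr_def)

definition rot :: "(nat \<Rightarrow> nat \<Rightarrow> complex) \<Rightarrow> nat \<Rightarrow> nat \<Rightarrow> nat \<Rightarrow> nat \<Rightarrow> complex" where
  "rot Phi i j = (\<lambda>a k. if a = i then rr * (Phi i k + Phi j k)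
                        else if a = j then rr * (Phi j k - Phi i k) else Phi a k)"

lemma rot_i: "rot Phi i j i = (\<lambda>k. rr * (Phi i k + Phi j k))"
  by (simp add: rot_def)
lemma rot_j: "i \<noteq> j \<Longrightarrow> rot Phi i j j = (\<lambda>k. rr * (Phi j k - Phi i k))"
  by (auto simp add: rot_def)
lemma rot_o: "a \<noteq> i \<Longrightarrow> a \<noteq> j \<Longrightarrow> rot Phi i j a = Phi a"
  by (auto simp add: rot_def)

lemma sum_two:
  fixes f :: "nat \<Rightarrow> 'b::comm_monoid_add"
  assumes "i \<noteq> j" "i < M" "j < M"
  shows "(\<Sum>a<M. f a) = f i + f j + (\<Sum>a\<in>{..<M}-{i,j}. f a)"
proof -
  have "(\<Sum>a<M. f a) = f i + (\<Sum>a\<in>{..<M}-{i}. f a)"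
    using assms by (simp add: sum.remove)
  also have "(\<Sum>a\<in>{..<M}-{i}. f a) = f j + (\<Sum>a\<in>{..<M}-{i}-{j}. f a)"
    using assms by (intro sum.remove) auto
  also have "{..<M}-{i}-{j} = {..<M}-{i,j}" by auto
  finally show ?thesis by (simp add: add.assoc)
qed

lemma rot_parseval:
  assumes P: "Phi \<in> parseval_frames K M N" and K: "K = \<real> \<or> K = UNIV"
    and ij: "i \<noteq> j" "i < M" "j < M"
  shows "rot Phi i j \<in> parseval_frames K M N"
proof -
  let ?Psi = "rot Phi i j"
  have P1: "\<forall>a<M. \<forall>k<N. Phi a k \<in> K" and P2: "\<forall>a k. (M \<le> a \<or> N \<le> k) \<longrightarrow> Phi a k = 0"
    and P3: "\<forall>k<N. \<forall>l<N. (\<Sum>a<M. Phi a k * cnj (Phi a l)) = (if k = l then 1 else 0)"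
    using P unfolding parseval_frames_def by blast+
  have A: "\<forall>a<M. \<forall>k<N. ?Psi a k \<in> K"
    using K
  proof
    assume "K = \<real>"
    then show ?thesis using P1 ij rr_real unfolding rot_def
      by (auto intro!: Reals_mult Reals_add Reals_diff)
  next
    assume "K = UNIV" then show ?thesis by simp
  qed
  have B: "\<forall>a k. (M \<le> a \<or> N \<le> k) \<longrightarrow> ?Psi a k = 0"
    using P2 ij unfolding rot_def by auto
  have C: "(\<Sum>a<M. ?Psi a k * cnj (?Psi a l)) = (\<Sum>a<M. Phi a k * cnj (Phi a l))" for k l
  proof -
    have "(\<Sum>a<M. ?Psi a k * cnj (?Psi a l))
        = ?Psi i k * cnj (?Psi i l) + ?Psi j k * cnj (?Psi j l) + (\<Sum>a\<in>{..<M}-{i,j}. ?Psi a k * cnj (?Psi a l))"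
      by (rule sum_two[OF ij])
    also have "(\<Sum>a\<in>{..<M}-{i,j}. ?Psi a k * cnj (?Psi a l)) = (\<Sum>a\<in>{..<M}-{i,j}. Phi a k * cnj (Phi a l))"
      by (intro sum.cong refl) (simp add: rot_o)
    also have "?Psi i k * cnj (?Psi i l) + ?Psi j k * cnj (?Psi j l) = Phi i k * cnj (Phi i l) + Phi j k * cnj (Phi j l)"
    proof -
      have "?Psi i k * cnj (?Psi i l) + ?Psi j k * cnj (?Psi j l)
          = (rr * rr * 2) * (Phi i k * cnj (Phi i l) + Phi j k * cnj (Phi j l))"
        using ij by (simp add: rot_i rot_j algebra_simps)
      moreover have "rr * rr * 2 = 1" by (simp add: rr_sq)
      ultimately show ?thesis by simp
    qed
    also have "Phi i k * cnj (Phi i l) + Phi j k * cnj (Phi j l) + (\<Sum>a\<in>{..<M}-{i,j}. Phi a k * cnj (Phi a l))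
        = (\<Sum>a<M. Phi a k * cnj (Phi a l))"
      by (rule sum_two[OF ij, symmetric])
    finally show ?thesis .
  qed
  show ?thesis unfolding parseval_frames_def using A B C P3 by simp
qed

lemma decomp:
  fixes T :: "nat \<Rightarrow> nat \<Rightarrow> real"
  assumes ij: "i \<noteq> j" "i < M" "j < M"
    and sym: "\<And>a b. T a b = T b a" and diag: "\<And>a. T a a = 0"
  shows "(\<Sum>a<M. \<Sum>b<M. T a b) = 2 * T i j + 2 * (\<Sum>b\<in>{..<M}-{i,j}. T i b + T j b)
           + (\<Sum>a\<in>{..<M}-{i,j}. \<Sum>b\<in>{..<M}-{i,j}. T a b)"
proof -
  let ?A = "{..<M}-{i,j}"
  have "(\<Sum>a<M. \<Sum>b<M. T a b) = (\<Sum>a<M. T a i + T a j + (\<Sum>b\<in>?A. T a b))"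
    by (intro sum.cong refl) (rule sum_two[OF ij])
  also have "\<dots> = (T i i + T i j + (\<Sum>b\<in>?A. T i b)) + (T j i + T j j + (\<Sum>b\<in>?A. T j b))
       + (\<Sum>a\<in>?A. T a i + T a j + (\<Sum>b\<in>?A. T a b))"
    by (rule sum_two[OF ij])
  also have "(\<Sum>a\<in>?A. T a i + T a j + (\<Sum>b\<in>?A. T a b)) = (\<Sum>a\<in>?A. T i a + T j a) + (\<Sum>a\<in>?A. \<Sum>b\<in>?A. T a b)"
    by (simp add: sum.distrib sym)
  finally show ?thesis using sym[of j i] diag by (simp add: sum.distrib)
qed

lemma tc_gain:
  assumes ij: "i \<noteq> j" "i < M" "j < M"
  shows "total_coherence M N (rot Phi i j) - total_coherence M N Phi
     \<ge> \<bar>nn N (Phi j) - nn N (Phi i)\<bar> - 4 * (\<Sum>b\<in>{..<M}-{i}. cmod (frame_inner N (Phi i) (Phi b)))"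
proof -
  define Psi where "Psi = rot Phi i j"
  define G where "G a b = frame_inner N (Phi a) (Phi b)" for a b
  define G' where "G' a b = frame_inner N (Psi a) (Psi b)" for a b
  define T where "T a b = (if a \<noteq> b then cmod (G a b) else 0)" for a b
  define T' where "T' a b = (if a \<noteq> b then cmod (G' a b) else 0)" for a b
  let ?A = "{..<M}-{i,j}"
  have TC: "total_coherence M N Phi = (\<Sum>a<M. \<Sum>b<M. T a b)"
    unfolding total_coherence_def T_def G_def by simp
  have TC': "total_coherence M N Psi = (\<Sum>a<M. \<Sum>b<M. T' a b)"
    unfolding total_coherence_def T'_def G'_def by simp
  have symT: "T a b = T b a" for a b
    unfolding T_def G_def using cmod_inner_sym by auto
  have symT': "T' a b = T' b a" for a b
    unfolding T'_def G'_def using cmod_inner_sym by auto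
  have D: "(\<Sum>a<M. \<Sum>b<M. T a b) = 2 * T i j + 2 * (\<Sum>b\<in>?A. T i b + T j b) + (\<Sum>a\<in>?A. \<Sum>b\<in>?A. T a b)"
    by (rule decomp[OF ij symT]) (simp add: T_def)
  have D': "(\<Sum>a<M. \<Sum>b<M. T' a b) = 2 * T' i j + 2 * (\<Sum>b\<in>?A. T' i b + T' j b) + (\<Sum>a\<in>?A. \<Sum>b\<in>?A. T' a b)"
    by (rule decomp[OF ij symT']) (simp add: T'_def)
  have same: "(\<Sum>a\<in>?A. \<Sum>b\<in>?A. T' a b) = (\<Sum>a\<in>?A. \<Sum>b\<in>?A. T a b)"
    by (intro sum.cong refl) (simp add: T_def T'_def G_def G'_def Psi_def rot_o)
  have Pi: "Psi i = (\<lambda>k. rr * (Phi i k + Phi j k))" by (simp add: Psi_def rot_i)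
  have Pj: "Psi j = (\<lambda>k. rr * (Phi j k - Phi i k))" using ij by (simp add: Psi_def rot_j)
  have side: "T' i b + T' j b - (T i b + T j b) \<ge> - cmod (G i b)" if b: "b \<in> ?A" for b
  proof -
    have bo: "b \<noteq> i" "b \<noteq> j" using b by auto
    have e1: "G' i b = rr * (G i b + G j b)"
      unfolding G'_def G_def Pi using bo by (simp add: Psi_def rot_o inner_scale_left inner_add_left)
    have e2: "G' j b = rr * (G j b - G i b)"
      unfolding G'_def G_def Pj using bo by (simp add: Psi_def rot_o inner_scale_left inner_diff_left)
    have tri: "2 * cmod (G j b) \<le> cmod (G i b + G j b) + cmod (G j b - G i b)"
      using norm_triangle_ineq[of "G i b + G j b" "G j b - G i b"] by simp
    have s2: "1 \<le> sqrt 2 / 2 * 2" by (simp add: real_le_rsqrt)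
    have "cmod (G j b) \<le> sqrt 2 / 2 * (2 * cmod (G j b))"
      using mult_right_mono[OF s2 norm_ge_zero[of "G j b"]] by simp
    also have "\<dots> \<le> sqrt 2 / 2 * (cmod (G i b + G j b) + cmod (G j b - G i b))"
      using tri by (intro mult_left_mono) auto
    also have "\<dots> = cmod (G' i b) + cmod (G' j b)"
      unfolding e1 e2 norm_mult rr_cmod by (rule distrib_left)
    finally have "cmod (G j b) \<le> cmod (G' i b) + cmod (G' j b)" .
    then show ?thesis using bo ij unfolding T_def T'_def by simp
  qed
  have cen: "T' i j \<ge> \<bar>nn N (Phi j) - nn N (Phi i)\<bar> / 2 - cmod (G i j)"
  proof -
    have "G' i j = rr * cnj rr * ((G i j - G i i) + (G j j - G j i))"
      unfolding G'_def G_def Pi Pj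
      by (simp add: inner_scale_left inner_scale_right inner_add_left inner_diff_right algebra_simps)
    also have "\<dots> = (G i j - G j i) / 2 + complex_of_real ((nn N (Phi j) - nn N (Phi i)) / 2)"
      by (simp add: rr_sq G_def inner_self field_simps)
    finally have e: "G' i j = (G i j - G j i) / 2 + complex_of_real ((nn N (Phi j) - nn N (Phi i)) / 2)" .
    have "\<bar>(nn N (Phi j) - nn N (Phi i)) / 2\<bar> \<le> cmod (G' i j) + cmod ((G i j - G j i) / 2)"
    proof -
      have w: "complex_of_real ((nn N (Phi j) - nn N (Phi i)) / 2) = G' i j - (G i j - G j i) / 2"
        using e by simp
      have "cmod (complex_of_real ((nn N (Phi j) - nn N (Phi i)) / 2)) \<le> cmod (G' i j) + cmod ((G i j - G j i) / 2)"
        unfolding w by (rule norm_triangle_ineq4)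
      then show ?thesis by (simp only: norm_of_real)
    qed
    moreover have "cmod ((G i j - G j i) / 2) \<le> cmod (G i j)"
    proof -
      have "cmod (G i j - G j i) \<le> cmod (G i j) + cmod (G j i)" by (rule norm_triangle_ineq4)
      moreover have "cmod (G j i) = cmod (G i j)" unfolding G_def by (rule cmod_inner_sym)
      ultimately show ?thesis by (simp add: norm_divide)
    qed
    ultimately show ?thesis using ij unfolding T'_def by simp
  qed
  have Tij: "T i j = cmod (G i j)" using ij by (simp add: T_def)
  have sumside: "(\<Sum>b\<in>?A. T' i b + T' j b) - (\<Sum>b\<in>?A. T i b + T j b) \<ge> - (\<Sum>b\<in>?A. cmod (G i b))"
  proof -
    have "(\<Sum>b\<in>?A. - cmod (G i b)) \<le> (\<Sum>b\<in>?A. T' i b + T' j b - (T i b + T j b))"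
      by (intro sum_mono) (use side in auto)
    then show ?thesis by (simp add: sum_subtractf sum_negf)
  qed
  have S: "(\<Sum>b\<in>{..<M}-{i}. cmod (G i b)) = cmod (G i j) + (\<Sum>b\<in>?A. cmod (G i b))"
  proof -
    have "(\<Sum>b\<in>{..<M}-{i}. cmod (G i b)) = cmod (G i j) + (\<Sum>b\<in>{..<M}-{i}-{j}. cmod (G i b))"
      using ij by (intro sum.remove) auto
    moreover have "{..<M}-{i}-{j} = ?A" by auto
    ultimately show ?thesis by simp
  qed
  show ?thesis
    unfolding Psi_def[symmetric] TC TC' D D' same S G_def[symmetric]
    using cen Tij sumside norm_ge_zero[of "G i j"] sum_nonneg[of ?A "\<lambda>b. cmod (G i b)"] by force
qed

lemma off_sq:
  assumes P: "Phi \<in> parseval_frames K M N" and i: "i < M"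
  shows "(\<Sum>b\<in>{..<M}-{i}. (cmod (frame_inner N (Phi i) (Phi b)))^2) = nn N (Phi i) - (nn N (Phi i))^2"
proof -
  have "(\<Sum>b<M. (cmod (frame_inner N (Phi i) (Phi b)))^2)
      = (cmod (frame_inner N (Phi i) (Phi i)))^2 + (\<Sum>b\<in>{..<M}-{i}. (cmod (frame_inner N (Phi i) (Phi b)))^2)"
    using i by (simp add: sum.remove)
  moreover have "(cmod (frame_inner N (Phi i) (Phi i)))^2 = (nn N (Phi i))^2"
    by (simp add: inner_self norm_of_real)
  ultimately show ?thesis using row_sq[OF P, of i] by simp
qed

lemma S_bound:
  assumes P: "Phi \<in> parseval_frames K M N" and i: "i < M"
  shows "(\<Sum>b\<in>{..<M}-{i}. cmod (frame_inner N (Phi i) (Phi b)))^2 \<le> real M * (nn N (Phi i) - (nn N (Phi i))^2)"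
    and "0 \<le> nn N (Phi i) - (nn N (Phi i))^2"
proof -
  let ?B = "{..<M}-{i}"
  have q: "0 \<le> (\<Sum>b\<in>?B. (cmod (frame_inner N (Phi i) (Phi b)))^2)" by (intro sum_nonneg) auto
  then show "0 \<le> nn N (Phi i) - (nn N (Phi i))^2" using off_sq[OF P i] by simp
  have "(\<Sum>b\<in>?B. cmod (frame_inner N (Phi i) (Phi b)))^2 \<le> real (card ?B) * (\<Sum>b\<in>?B. (cmod (frame_inner N (Phi i) (Phi b)))^2)"
    by (rule cs_sum) simp
  also have "\<dots> \<le> real M * (\<Sum>b\<in>?B. (cmod (frame_inner N (Phi i) (Phi b)))^2)"
    using q by (intro mult_right_mono) (auto intro: order.trans[OF card_mono[OF finite_lessThan Diff_subset]])
  finally show "(\<Sum>b\<in>?B. cmod (frame_inner N (Phi i) (Phi b)))^2 \<le> real M * (nn N (Phi i) - (nn N (Phi i))^2)"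
    using off_sq[OF P i] by simp
qed

theorem theorem4:
  fixes K :: "complex set" and M N :: nat
  assumes "K = \<real> \<or> K = UNIV"
    and "0 < N" and "N < M"
  shows "\<exists>c d. 0 < c \<and> c \<le> d \<and> d < 1 \<and>
           (\<forall>Phi \<in> parseval_frames K M N.
              (\<forall>Psi \<in> parseval_frames K M N. total_coherence M N Psi \<le> total_coherence M N Phi)
              \<longrightarrow> (\<forall>i<M. c \<le> frame_vnorm N (Phi i) \<and> frame_vnorm N (Phi i) \<le> d))"
proof -
  define \<rho> where "\<rho> = real N / real M"
  define \<delta> where "\<delta> = min \<rho> (1 - \<rho>)"
  define \<epsilon> where "\<epsilon> = \<delta>^2 / (64 * real M)"
  have M0: "real M > 0" using assms by simp
  have rho: "0 < \<rho>" "\<rho> < 1" using assms unfolding \<rho>_def by (auto simp: field_simps)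
  have del: "0 < \<delta>" "\<delta> \<le> \<rho>" "\<delta> \<le> 1 - \<rho>" "\<delta> \<le> 1/2" using rho unfolding \<delta>_def by (auto simp: min_def)
  have M1: "real M \<ge> 1" using assms by simp
  have eps0: "0 < \<epsilon>" using del M0 unfolding \<epsilon>_def by simp
  have eps1: "\<epsilon> \<le> \<delta> / 64"
  proof -
    have "\<delta>^2 \<le> \<delta> * real M" using del M1 by (simp add: power2_eq_square mult_mono)
    then show ?thesis unfolding \<epsilon>_def using M0 by (simp add: field_simps)
  qed
  have epsM: "16 * (real M * \<epsilon>) = \<delta>^2 / 4" unfolding \<epsilon>_def using M0 by (simp add: field_simps)
  have key: "\<epsilon> \<le> nn N (Phi i) \<and> nn N (Phi i) \<le> 1 - \<epsilon>"
    if P: "Phi \<in> parseval_frames K M N"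
      and mx: "\<forall>Psi \<in> parseval_frames K M N. total_coherence M N Psi \<le> total_coherence M N Phi"
      and i: "i < M" for Phi i
  proof (rule ccontr)
    assume bad: "\<not> (\<epsilon> \<le> nn N (Phi i) \<and> nn N (Phi i) \<le> 1 - \<epsilon>)"
    define n where "n a = nn N (Phi a)" for a
    define S where "S = (\<Sum>b\<in>{..<M}-{i}. cmod (frame_inner N (Phi i) (Phi b)))"
    have S0: "0 \<le> S" unfolding S_def by (intro sum_nonneg) auto
    have Sb: "S^2 \<le> real M * (n i - (n i)^2)" and nb: "0 \<le> n i - (n i)^2"
      using S_bound[OF P i] unfolding S_def n_def by auto
    have n0: "0 \<le> n i" unfolding n_def nn_def by (intro sum_nonneg) auto
    have n1: "n i \<le> 1"
    proof (rule ccontr)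
      assume "\<not> n i \<le> 1"
      then have "n i * 1 < n i * n i" using n0 by (intro mult_strict_left_mono) auto
      then show False using nb by (simp add: power2_eq_square)
    qed
    have sumn: "(\<Sum>a<M. n a) = real N" using sum_norms[OF P] unfolding n_def .
    have small: "n i - (n i)^2 \<le> \<epsilon>"
    proof (cases "n i < \<epsilon>")
      case True
      have "0 \<le> n i * n i" using n0 by simp
      then show ?thesis using True unfolding power2_eq_square by linarith
    next
      case False
      then have hi: "n i > 1 - \<epsilon>" using bad unfolding n_def by auto
      have "n i * (1 - n i) \<le> 1 * (1 - n i)" using n1 by (intro mult_right_mono) auto
      then show ?thesis using hi by (simp add: power2_eq_square algebra_simps)
    qed
    have "\<exists>j<M. j \<noteq> i \<and> \<bar>n j - n i\<bar> \<ge> \<delta> - \<epsilon>"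
    proof (cases "n i < \<epsilon>")
      case True
      have "\<exists>j<M. n j \<ge> \<rho>"
      proof (rule ccontr)
        assume "\<not> ?thesis"
        then have "(\<Sum>a<M. n a) < (\<Sum>a<M. \<rho>)"
          using assms by (intro sum_strict_mono) auto
        then show False using sumn M0 unfolding \<rho>_def by simp
      qed
      then obtain j where j: "j < M" "n j \<ge> \<rho>" by blast
      have "j \<noteq> i" using j True eps1 del by auto
      moreover have "\<bar>n j - n i\<bar> \<ge> \<delta> - \<epsilon>" using j True del by auto
      ultimately show ?thesis using j by blast
    next
      case False
      then have hi: "n i > 1 - \<epsilon>" using bad unfolding n_def by auto
      have "\<exists>j<M. n j \<le> \<rho>"
      proof (rule ccontr)
        assume "\<not> ?thesis"
        then have "(\<Sum>a<M. \<rho>) < (\<Sum>a<M. n a)"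
          using assms by (intro sum_strict_mono) auto
        then show False using sumn M0 unfolding \<rho>_def by simp
      qed
      then obtain j where j: "j < M" "n j \<le> \<rho>" by blast
      have "j \<noteq> i" using j hi eps1 del by auto
      moreover have "\<bar>n j - n i\<bar> \<ge> \<delta> - \<epsilon>" using j hi del by auto
      ultimately show ?thesis using j by blast
    qed
    then obtain j where j: "j < M" "j \<noteq> i" "\<bar>n j - n i\<bar> \<ge> \<delta> - \<epsilon>" by blast
    have gain: "total_coherence M N (rot Phi i j) - total_coherence M N Phi \<ge> \<bar>n j - n i\<bar> - 4 * S"
      using tc_gain[of i j M N Phi] j i unfolding n_def S_def by auto
    have "(4 * S)^2 \<le> (\<delta> / 2)^2"
    proof -
      have "(4 * S)^2 = 16 * S^2" by (simp add: power2_eq_square)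
      also have "\<dots> \<le> 16 * (real M * \<epsilon>)"
        using Sb small M0 by (smt (verit) mult_left_mono)
      also have "\<dots> = (\<delta> / 2)^2" using epsM by (simp add: power2_eq_square)
      finally show ?thesis .
    qed
    then have "4 * S \<le> \<delta> / 2" by (rule power2_le_imp_le) (use del in simp)
    then have "total_coherence M N (rot Phi i j) > total_coherence M N Phi"
      using gain j eps1 del by linarith
    moreover have "rot Phi i j \<in> parseval_frames K M N"
      using rot_parseval[OF P assms(1), of i j] j i by auto
    ultimately show False using mx by fastforce
  qed
  show ?thesis
  proof (intro exI conjI)
    show "0 < sqrt \<epsilon>" using eps0 by simp
    show "sqrt \<epsilon> \<le> sqrt (1 - \<epsilon>)" using eps1 del by simp
    show "sqrt (1 - \<epsilon>) < 1" using eps0 by simp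
    show "\<forall>Phi \<in> parseval_frames K M N.
              (\<forall>Psi \<in> parseval_frames K M N. total_coherence M N Psi \<le> total_coherence M N Phi)
              \<longrightarrow> (\<forall>i<M. sqrt \<epsilon> \<le> frame_vnorm N (Phi i) \<and> frame_vnorm N (Phi i) \<le> sqrt (1 - \<epsilon>))"
      using key unfolding frame_vnorm_def nn_def[symmetric] by auto
  qed
qed

end
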